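(* Let $f\ge0$ be integrable on $[-\pi,\pi]$ with $\int f>0$ and let $\sigma_n^2(f)=\min_{q\in\mathcal{Q}_n(1)}\int_{-\pi}^{\pi}|q(e^{i\lambda})|^2f(\lambda)\,d\lambda$. If $\sigma_n^2(f)$ decreases to zero exponentially, i.e. $\limsup_{n\to\infty}\sqrt[n]{\sigma_n^2(f)}<1$, then for every neighborhood $U$ of $0$ the set $\{\lambda\in U: f(\lambda)=0\}$ has positive Lebesgue measure.
   Context: $\mathcal{Q}_n(1)$ denotes the set of complex polynomials of degree at most $n$ with $q(1)=1$; $\sigma_n^2(f)$ is the variance of the BLUE of the constant mean of a stationary process with spectral density $f$ from $n+1$ consecutive observations. *)

theory Defs
  imports "HOL-Analysis.Analysis" "HOL-Computational_Algebra.Polynomial"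
begin

definition Qn1 :: "nat \<Rightarrow> complex poly set" where
  "Qn1 n = {q. degree q \<le> n \<and> poly q 1 = 1}"

text \<open>sigma_n^2(f) = min over q in Q_n(1) of the integral over [-pi,pi]
  of |q(e^{i l})|^2 f(l) (Lebesgue integral); the minimum is attained, so we use INF.\<close>
definition sigma2 :: "nat \<Rightarrow> (real \<Rightarrow> real) \<Rightarrow> real" where
  "sigma2 n f = (INF q \<in> Qn1 n. LINT l:{-pi..pi}|lebesgue. (cmod (poly q (cis l)))^2 * f l)"

end

theory Submission
  imports Defs
begin


lemma lagrange_interp:
  fixes q :: "complex poly" and z :: "nat \<Rightarrow> complex"
  assumes inj: "inj_on z {1..N}" and deg: "degree q < N"
  shows "poly q w = (\<Sum>i\<in>{1..N}. poly q (z i) * (\<Prod>j\<in>{1..N}-{i}. (w - z j) / (z i - z j)))"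
proof -
  define p where "p = (\<Sum>i\<in>{1..N}. smult (poly q (z i)) (\<Prod>j\<in>{1..N}-{i}. smult (1/(z i - z j)) [:- z j, 1:]))"
  have pw: "poly p x = (\<Sum>i\<in>{1..N}. poly q (z i) * (\<Prod>j\<in>{1..N}-{i}. (x - z j) / (z i - z j)))" for x
    unfolding p_def by (simp add: poly_sum poly_prod diff_divide_distrib algebra_simps)
  have dp: "degree p \<le> N - 1"
    unfolding p_def
  proof (intro degree_sum_le)
    fix i assume i: "i \<in> {1..N}"
    have "degree (\<Prod>j\<in>{1..N}-{i}. smult (1/(z i - z j)) [:- z j, 1:]) \<le> (\<Sum>j\<in>{1..N}-{i}. degree (smult (1/(z i - z j)) [:- z j, 1:]))"
      using degree_prod_sum_le[of "{1..N}-{i}" "\<lambda>j. smult (1/(z i - z j)) [:- z j, 1:]"] by (simp only: o_def finite_Diff finite_atLeastAtMost)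
    also have "\<dots> \<le> (\<Sum>j\<in>{1..N}-{i}. 1)"
      by (intro sum_mono) (auto intro: order.trans[OF degree_smult_le])
    also have "\<dots> = N - 1" using i by simp
    finally show "degree (smult (poly q (z i)) (\<Prod>j\<in>{1..N}-{i}. smult (1/(z i - z j)) [:- z j, 1:])) \<le> N - 1"
      by (meson degree_smult_le order.trans)
  qed auto
  have ev: "poly p (z k) = poly q (z k)" if k: "k \<in> {1..N}" for k
  proof -
    have z0: "(\<Prod>j\<in>{1..N}-{i}. (z k - z j) / (z i - z j)) = 0" if "i \<in> {1..N}-{k}" for i
      using that k by (intro prod_zero) auto
    have z1: "(\<Prod>j\<in>{1..N}-{k}. (z k - z j) / (z k - z j)) = 1"
    proof (rule prod.neutral, intro ballI)
      fix j assume j: "j \<in> {1..N}-{k}"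
      have "z k \<noteq> z j" using inj k j by (metis DiffD1 DiffD2 inj_onD singletonI)
      then show "(z k - z j) / (z k - z j) = 1" by simp
    qed
    have S0: "(\<Sum>i\<in>{1..N}-{k}. poly q (z i) * (\<Prod>j\<in>{1..N}-{i}. (z k - z j) / (z i - z j))) = 0"
      by (rule sum.neutral, intro ballI, subst z0, assumption, simp)
    have "poly p (z k) = (\<Sum>i\<in>{1..N}. poly q (z i) * (\<Prod>j\<in>{1..N}-{i}. (z k - z j) / (z i - z j)))" by (rule pw)
    also have "\<dots> = poly q (z k) * (\<Prod>j\<in>{1..N}-{k}. (z k - z j) / (z k - z j)) + (\<Sum>i\<in>{1..N}-{k}. poly q (z i) * (\<Prod>j\<in>{1..N}-{i}. (z k - z j) / (z i - z j)))"
      using k by (subst sum.remove) auto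
    also have "\<dots> = poly q (z k)" unfolding S0 z1 by simp
    finally show ?thesis .
  qed
  have c: "card (z ` {1..N}) = N" using inj by (simp add: card_image)
  have "p = q"
  proof (rule poly_eqI_degree[where A = "z ` {1..N}"])
    show "poly p x = poly q x" if "x \<in> z ` {1..N}" for x
    proof -
      from that obtain k where k: "k \<in> {1..N}" and x: "x = z k" by (rule imageE)
      show ?thesis unfolding x by (rule ev[OF k])
    qed
    show "card (z ` {1..N}) > degree p" using c dp deg by linarith
    show "card (z ` {1..N}) > degree q" using c deg by linarith
  qed
  then show ?thesis using pw[of w] by (simp only:)
qed



lemma cmod_one_minus_cis: "cmod (1 - cis a) \<le> \<bar>a\<bar>"
proof -
  have c: "cos a = 1 - 2 * (sin (a/2))^2"
    using cos_double[of "a/2"] sin_cos_squared_add[of "a/2"] by simp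
  have "(cmod (1 - cis a))^2 = (1 - cos a)^2 + (sin a)^2"
    by (simp add: cmod_power2)
  also have "\<dots> = 2 - 2 * cos a"
    using sin_cos_squared_add[of a] by (simp add: power2_eq_square algebra_simps)
  also have "\<dots> = 4 * (sin (a/2))^2" using c by simp
  also have "\<dots> \<le> 4 * (a/2)^2"
  proof -
    have "(sin (a/2))^2 \<le> (a/2)^2" using abs_sin_x_le_abs_x[of "a/2"] by (simp only: abs_le_square_iff)
    then show ?thesis by simp
  qed
  also have "\<dots> = \<bar>a\<bar>^2" by (simp add: power2_eq_square)
  finally show ?thesis by (simp add: abs_le_square_iff[symmetric])
qed

lemma cis_diff_lower:
  assumes "a \<in> {0..d}" "b \<in> {0..d}" "d \<le> pi"
  shows "cos d * \<bar>a - b\<bar> \<le> cmod (cis a - cis b)"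
proof -
  have key: "cos d * (y - x) \<le> \<bar>sin y - sin x\<bar>" if "0 \<le> x" "x < y" "y \<le> d" for x y
  proof -
    have "\<exists>z. x < z \<and> z < y \<and> sin y - sin x = (y - x) * cos z"
      by (rule MVT2) (use that in \<open>auto intro: DERIV_sin\<close>)
    then obtain z where z: "x < z" "z < y" "sin y - sin x = (y - x) * cos z" by blast
    have "cos d \<le> cos z" using z that assms by (intro cos_monotone_0_pi_le) auto
    then have "cos d * (y - x) \<le> cos z * (y - x)" using that by (intro mult_right_mono) auto
    also have "\<dots> \<le> \<bar>sin y - sin x\<bar>" using z by (simp add: mult.commute)
    finally show ?thesis .
  qed
  have "cos d * \<bar>a - b\<bar> \<le> \<bar>sin a - sin b\<bar>"
  proof (cases a b rule: linorder_cases)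
    case less then show ?thesis using key[of a b] assms by (simp add: abs_minus_commute)
  next
    case equal then show ?thesis by simp
  next
    case greater then show ?thesis using key[of b a] assms by (simp add: abs_minus_commute)
  qed
  also have "\<dots> = \<bar>Im (cis a - cis b)\<bar>" by simp
  also have "\<dots> \<le> cmod (cis a - cis b)" by (rule abs_Im_le_cmod)
  finally show ?thesis .
qed

lemma one_plus_sq_le_exp: "0 \<le> y \<Longrightarrow> 1 + y^2 \<le> exp (4 * sqrt y)"
proof -
  assume y: "0 \<le> y"
  have "1 + y \<le> (1 + sqrt y)^2" using y by (simp add: power2_eq_square algebra_simps)
  also have "\<dots> \<le> (exp (sqrt y))^2"
    using exp_ge_add_one_self[of "sqrt y"] y by (intro power_mono) auto
  finally have h: "1 + y \<le> exp (2 * sqrt y)" by (simp add: exp_double[symmetric] power2_eq_square exp_add[symmetric])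
  have "1 + y^2 \<le> (1 + y)^2" using y by (simp add: power2_eq_square algebra_simps)
  also have "\<dots> \<le> (exp (2 * sqrt y))^2" using h y by (intro power_mono) auto
  also have "\<dots> = exp (4 * sqrt y)" by (simp add: power2_eq_square exp_add[symmetric])
  finally show ?thesis .
qed

lemma sum_inv_sqrt: "(\<Sum>j\<in>{1..N}. 1 / sqrt (real j)) \<le> 2 * sqrt (real N)"
proof (induction N)
  case 0 then show ?case by simp
next
  case (Suc N)
  have a: "1 / sqrt (real (Suc N)) \<le> 2 * sqrt (real (Suc N)) - 2 * sqrt (real N)"
  proof -
    have s: "sqrt (real N) \<le> sqrt (real (Suc N))" by simp
    have p: "sqrt (real (Suc N)) > 0" by simp
    have "1 = (sqrt (real (Suc N)))^2 - (sqrt (real N))^2" by simp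
    also have "\<dots> = (sqrt (real (Suc N)) - sqrt (real N)) * (sqrt (real (Suc N)) + sqrt (real N))"
      by (simp add: power2_eq_square algebra_simps)
    also have "\<dots> \<le> (sqrt (real (Suc N)) - sqrt (real N)) * (2 * sqrt (real (Suc N)))"
      using s by (intro mult_left_mono) auto
    finally have "1 \<le> (sqrt (real (Suc N)) - sqrt (real N)) * (2 * sqrt (real (Suc N)))" .
    then show ?thesis using p by (simp add: field_simps)
  qed
  show ?case using Suc a by simp
qed

lemma prod_bound:
  assumes c: "0 \<le> c"
  shows "(\<Prod>j\<in>{1..N}. 1 + c^2 / (real j)^2) \<le> exp (8 * sqrt c * sqrt (real N))"
proof -
  have "(\<Prod>j\<in>{1..N}. 1 + c^2 / (real j)^2) \<le> (\<Prod>j\<in>{1..N}. exp (4 * sqrt (c / real j)))"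
  proof (intro prod_mono conjI)
    fix j assume j: "j \<in> {1..N}"
    show "0 \<le> 1 + c^2 / (real j)^2" by simp
    have "1 + (c / real j)^2 \<le> exp (4 * sqrt (c / real j))" using c by (intro one_plus_sq_le_exp) auto
    then show "1 + c^2 / (real j)^2 \<le> exp (4 * sqrt (c / real j))" by (simp add: power_divide)
  qed
  also have "\<dots> = exp (\<Sum>j\<in>{1..N}. 4 * sqrt (c / real j))" by (simp add: exp_sum)
  also have "(\<Sum>j\<in>{1..N}. 4 * sqrt (c / real j)) = 4 * sqrt c * (\<Sum>j\<in>{1..N}. 1 / sqrt (real j))"
    by (simp add: sum_distrib_left real_sqrt_divide)
  also have "\<dots> \<le> 4 * sqrt c * (2 * sqrt (real N))"
    using c by (intro mult_left_mono sum_inv_sqrt) auto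
  finally show ?thesis by (simp add: mult_ac)
qed



lemma fact_real_prod: "(fact n :: real) = (\<Prod>j\<in>{1..n}. real j)"
  by (simp add: fact_prod)

lemma fact_sq_le: "(fact (m + i) :: real)^2 \<le> fact m * fact (m + 2 * i)"
proof (induction i)
  case 0 then show ?case by (simp add: power2_eq_square)
next
  case (Suc i)
  have e1: "(fact (m + Suc i) :: real) = fact (m + i) * real (m + i + 1)"
    by (simp add: algebra_simps)
  have e2: "(fact (m + 2 * Suc i) :: real) = fact (m + 2 * i) * (real (m + 2*i + 1) * real (m + 2*i + 2))"
  proof -
    have "m + 2 * Suc i = Suc (Suc (m + 2 * i))" by simp
    then show ?thesis by (simp only: fact_Suc) (simp add: algebra_simps)
  qed
  have "(fact (m + Suc i) :: real)^2 = (fact (m + i))^2 * (real (m + i + 1))^2"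
    by (simp add: e1 power_mult_distrib)
  also have "\<dots> \<le> (fact m * fact (m + 2 * i)) * (real (m + 2*i + 1) * real (m + 2*i + 2))"
  proof (rule mult_mono)
    show "(real (m + i + 1))^2 \<le> real (m + 2*i + 1) * real (m + 2*i + 2)"
      by (simp add: power2_eq_square mult_mono)
  qed (use Suc in auto)
  also have "\<dots> = fact m * fact (m + 2 * Suc i)" by (simp add: e2)
  finally show ?case .
qed

lemma G_bound:
  assumes i: "1 \<le> i" "i \<le> N"
  shows "(\<Prod>j\<in>{1..N}-{i}. (real j)^2 / \<bar>(real j)^2 - (real i)^2\<bar>) \<le> 2"
proof -
  define S where "S = {1..N}-{i}"
  have P1: "(\<Prod>j\<in>S. real j) = fact N / real i"
  proof -
    have "fact N = (\<Prod>j\<in>{1..N}. real j)" by (rule fact_real_prod)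
    also have "\<dots> = real i * (\<Prod>j\<in>S. real j)" unfolding S_def using i by (subst prod.remove) auto
    finally show ?thesis using i by (simp add: field_simps)
  qed
  have Q3: "(\<Prod>j\<in>{1..n}. real j + real i) = fact (n + i) / fact i" for n
  proof (induction n)
    case 0 then show ?case by simp
  next
    case (Suc n)
    have "(\<Prod>j\<in>{1..Suc n}. real j + real i) = (\<Prod>j\<in>{1..n}. real j + real i) * (real (Suc n) + real i)"
      by (simp add: prod.cl_ivl_Suc)
    also have "\<dots> = fact (n + i) / fact i * (real (Suc n) + real i)" using Suc by simp
    also have "\<dots> = fact (Suc n + i) / fact i" by (simp add: algebra_simps)
    finally show ?case .
  qed
  have P3: "(\<Prod>j\<in>S. real j + real i) = fact (N + i) / (fact i * (2 * real i))"
  proof -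
    have "fact (N + i) / fact i = (\<Prod>j\<in>{1..N}. real j + real i)" by (rule Q3[symmetric])
    also have "\<dots> = (2 * real i) * (\<Prod>j\<in>S. real j + real i)" unfolding S_def using i by (subst prod.remove) auto
    finally show ?thesis using i by (simp add: field_simps)
  qed
  have SU: "S = {1..<i} \<union> {i+1..N}" unfolding S_def using i by auto
  have B1: "(\<Prod>j\<in>{1..<i}. \<bar>real j - real i\<bar>) = fact (i - 1)"
  proof -
    have "(\<Prod>j\<in>{1..<i}. \<bar>real j - real i\<bar>) = (\<Prod>j\<in>{1..<i}. real j)"
      by (rule prod.reindex_bij_witness[where i = "\<lambda>b. i - b" and j = "\<lambda>a. i - a"]) auto
    also have "\<dots> = (\<Prod>j\<in>{1..i-1}. real j)" using i by (intro prod.cong) auto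
    also have "\<dots> = fact (i - 1)" by (rule fact_real_prod[symmetric])
    finally show ?thesis .
  qed
  have B2: "(\<Prod>j\<in>{i+1..N}. \<bar>real j - real i\<bar>) = fact (N - i)"
  proof -
    have "(\<Prod>j\<in>{i+1..N}. \<bar>real j - real i\<bar>) = (\<Prod>j\<in>{1..N-i}. real j)"
      by (rule prod.reindex_bij_witness[where i = "\<lambda>b. b + i" and j = "\<lambda>a. a - i"]) auto
    also have "\<dots> = fact (N - i)" by (rule fact_real_prod[symmetric])
    finally show ?thesis .
  qed
  have P2: "(\<Prod>j\<in>S. \<bar>real j - real i\<bar>) = fact (i - 1) * fact (N - i)"
  proof -
    have "(\<Prod>j\<in>S. \<bar>real j - real i\<bar>) = (\<Prod>j\<in>{1..<i}. \<bar>real j - real i\<bar>) * (\<Prod>j\<in>{i+1..N}. \<bar>real j - real i\<bar>)"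
      unfolding SU by (rule prod.union_disjoint) auto
    then show ?thesis by (simp only: B1 B2)
  qed
  have "(\<Prod>j\<in>S. (real j)^2 / \<bar>(real j)^2 - (real i)^2\<bar>)
      = (\<Prod>j\<in>S. real j * real j / (\<bar>real j - real i\<bar> * (real j + real i)))"
  proof (intro prod.cong refl)
    fix j assume "j \<in> S"
    have "\<bar>(real j)^2 - (real i)^2\<bar> = \<bar>real j - real i\<bar> * (real j + real i)"
    proof -
      have "(real j)^2 - (real i)^2 = (real j - real i) * (real j + real i)" by (simp add: power2_eq_square algebra_simps)
      then have "\<bar>(real j)^2 - (real i)^2\<bar> = \<bar>real j - real i\<bar> * \<bar>real j + real i\<bar>" by (simp add: abs_mult)
      then show ?thesis by simp
    qed
    then show "(real j)^2 / \<bar>(real j)^2 - (real i)^2\<bar> = real j * real j / (\<bar>real j - real i\<bar> * (real j + real i))"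
      by (simp add: power2_eq_square)
  qed
  also have "\<dots> = (\<Prod>j\<in>S. real j) * (\<Prod>j\<in>S. real j) / ((\<Prod>j\<in>S. \<bar>real j - real i\<bar>) * (\<Prod>j\<in>S. real j + real i))"
    by (simp add: prod_dividef prod.distrib)
  also have "\<dots> = (fact N / real i) * (fact N / real i) / ((fact (i - 1) * fact (N - i)) * (fact (N + i) / (fact i * (2 * real i))))"
    by (simp only: P1 P2 P3)
  also have "\<dots> = 2 * (fact N)^2 / (fact (N - i) * fact (N + i))"
  proof -
    have fi: "(fact i :: real) = real i * fact (i - 1)" using i by (intro fact_reduce) auto
    have n1: "(fact (i - 1) :: real) \<noteq> 0" "(fact (N - i) :: real) \<noteq> 0" "(fact (N + i) :: real) \<noteq> 0" "real i \<noteq> 0"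
      using i by auto
    show ?thesis unfolding fi using n1 by (simp add: divide_simps power2_eq_square)
  qed
  also have "\<dots> \<le> 2"
  proof -
    have "(fact N :: real)^2 \<le> fact (N - i) * fact (N - i + 2 * i)"
      using fact_sq_le[of "N - i" i] i by simp
    moreover have "N - i + 2 * i = N + i" using i by simp
    ultimately have "(fact N :: real)^2 \<le> fact (N - i) * fact (N + i)" by simp
    moreover have "(0::real) < fact (N - i) * fact (N + i)" by simp
    ultimately show ?thesis by (simp add: field_simps)
  qed
  finally show ?thesis unfolding S_def .
qed



lemma psi_meas:
  fixes F :: "real set"
  assumes "compact F" shows "F \<inter> {..x} \<in> lmeasurable"
  using assms by (intro lmeasurable_compact compact_Int_closed closed_atMost)

lemma psi_mono_lip:
  fixes F :: "real set"
  assumes F: "compact F" and xy: "x \<le> y"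
  shows "measure lebesgue (F \<inter> {..x}) \<le> measure lebesgue (F \<inter> {..y})"
    and "measure lebesgue (F \<inter> {..y}) \<le> measure lebesgue (F \<inter> {..x}) + (y - x)"
proof -
  show "measure lebesgue (F \<inter> {..x}) \<le> measure lebesgue (F \<inter> {..y})"
    using xy psi_meas[OF F] by (intro measure_mono_fmeasurable) auto
  have "measure lebesgue (F \<inter> {..y}) \<le> measure lebesgue ((F \<inter> {..x}) \<union> {x..y})"
    using xy psi_meas[OF F] by (intro measure_mono_fmeasurable) auto
  also have "\<dots> \<le> measure lebesgue (F \<inter> {..x}) + measure lebesgue {x..y}"
    using psi_meas[OF F] by (intro measure_Un_le) auto
  finally show "measure lebesgue (F \<inter> {..y}) \<le> measure lebesgue (F \<inter> {..x}) + (y - x)"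
    using xy by simp
qed

lemma psi_dist:
  fixes F :: "real set"
  assumes F: "compact F"
  shows "\<bar>measure lebesgue (F \<inter> {..x}) - measure lebesgue (F \<inter> {..y})\<bar> \<le> \<bar>x - y\<bar>"
proof (cases "x \<le> y")
  case True then show ?thesis using psi_mono_lip[OF F True] by auto
next
  case False then have "y \<le> x" by simp
  then show ?thesis using psi_mono_lip[OF F \<open>y \<le> x\<close>] by auto
qed

lemma psi_gap:
  fixes F :: "real set"
  assumes F: "compact F" "F \<subseteq> {0..d}" and x: "0 \<le> x" "x \<le> d"
  shows "x - measure lebesgue (F \<inter> {..x}) \<le> d - measure lebesgue F"
proof -
  have Fm: "F \<in> lmeasurable" using F by (intro lmeasurable_compact)
  have "x = measure lebesgue {0..x}" using x by simp
  also have "\<dots> \<le> measure lebesgue ((F \<inter> {..x}) \<union> ({0..d} - F))"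
    using x Fm psi_meas[OF F(1)] by (intro measure_mono_fmeasurable) auto
  also have "\<dots> \<le> measure lebesgue (F \<inter> {..x}) + measure lebesgue ({0..d} - F)"
    using Fm psi_meas[OF F(1)] by (intro measure_Un_le) auto
  also have "measure lebesgue ({0..d} - F) = d - measure lebesgue F"
  proof -
    have I: "{0..d} \<in> lmeasurable" by simp
    have "emeasure lebesgue {0..d} \<noteq> \<infinity>" using fmeasurableD2[OF I] by simp
    then show ?thesis using F Fm I x by (subst measure_Diff) auto
  qed
  finally show ?thesis by simp
qed

lemma node_exists:
  fixes F :: "real set"
  assumes F: "compact F" "F \<subseteq> {0..d}" and t: "0 < t" "t \<le> measure lebesgue F"
  shows "\<exists>x\<in>F. measure lebesgue (F \<inter> {..x}) = t"
proof -
  define \<psi> where "\<psi> x = measure lebesgue (F \<inter> {..x})" for x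
  have cont: "continuous_on S \<psi>" for S
  proof (rule lipschitz_on_continuous_on)
    show "1-lipschitz_on S \<psi>"
      by (rule lipschitz_onI) (auto simp: \<psi>_def dist_real_def psi_dist[OF F(1)])
  qed
  have d0: "0 \<le> d" using t F measure_notin_sets[of F lebesgue] by (cases "F = {}") auto
  have psi0: "\<psi> x = 0" if "x \<le> 0" for x
  proof -
    have "\<psi> x \<le> measure lebesgue {0..(0::real)}"
      unfolding \<psi>_def using F that fmeasurableD[OF psi_meas[OF F(1), of x]] by (intro measure_mono_fmeasurable) (auto intro: lmeasurable_compact)
    then show ?thesis unfolding \<psi>_def by (simp add: measure_nonneg antisym)
  qed
  have psid: "\<psi> d = measure lebesgue F"
    unfolding \<psi>_def using F by (metis Int_absorb2 atLeastAtMost_iff atMost_iff subset_eq)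
  define A where "A = {0..d} \<inter> \<psi> -` {t..}"
  have Aclosed: "closed A" unfolding A_def by (intro continuous_closed_preimage cont) auto
  have dA: "d \<in> A" unfolding A_def using d0 psid t by auto
  have Abdd: "bdd_below A" unfolding A_def by (rule bdd_belowI[of _ 0]) auto
  define x0 where "x0 = Inf A"
  have x0A: "x0 \<in> A" unfolding x0_def using Aclosed dA Abdd by (intro closed_contains_Inf) auto
  have x0le: "x0 \<le> y" if "y \<in> A" for y unfolding x0_def using that Abdd by (rule cInf_lower)
  have x0r: "0 \<le> x0" "x0 \<le> d" "t \<le> \<psi> x0" using x0A unfolding A_def by auto
  have psix0: "\<psi> x0 = t"
  proof -
    obtain y where y: "0 \<le> y" "y \<le> x0" "\<psi> y = t"
      using IVT'[of \<psi> 0 t x0] psi0[of 0] x0r t cont by auto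
    then have "y \<in> A" unfolding A_def using x0r by auto
    then have "x0 \<le> y" by (rule x0le)
    then show ?thesis using y by simp
  qed
  have x0pos: "0 < x0" using psix0 psi0[of x0] t by (cases "x0 \<le> 0") auto
  have "x0 \<in> F"
  proof (rule ccontr)
    assume nF: "x0 \<notin> F"
    have "open (- F)" using F by (simp add: compact_imp_closed open_Compl)
    then obtain e where e: "e > 0" "ball x0 e \<subseteq> - F" using nF by (meson ComplI open_contains_ball)
    define y where "y = max 0 (x0 - e/2)"
    have yx: "y < x0" unfolding y_def using e x0pos by auto
    have sub: "F \<inter> {..x0} \<subseteq> F \<inter> {..y}"
    proof
      fix z assume z: "z \<in> F \<inter> {..x0}"
      show "z \<in> F \<inter> {..y}"
      proof (rule ccontr)
        assume "z \<notin> F \<inter> {..y}"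
        then have "z > x0 - e/2" using z unfolding y_def by auto
        then have "z \<in> ball x0 e" using z e by (auto simp: dist_real_def)
        then show False using e z by auto
      qed
    qed
    have "\<psi> x0 \<le> \<psi> y" unfolding \<psi>_def using sub psi_meas[OF F(1)] by (intro measure_mono_fmeasurable) auto
    then have "y \<in> A" unfolding A_def using yx x0r psix0 unfolding y_def by auto
    then show False using x0le yx by force
  qed
  then show ?thesis using psix0 unfolding \<psi>_def by blast
qed



lemma poly_node_bound:
  fixes q :: "complex poly" and F :: "real set"
  assumes F: "compact F" "F \<subseteq> {0..d}" and d: "d \<le> pi" "cos d > 0"
    and tau: "measure lebesgue F > 0"
    and q1: "poly q 1 = 1" and deg: "degree q \<le> n"
    and M: "\<And>x. x \<in> F \<Longrightarrow> cmod (poly q (cis x)) \<le> m"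
  shows "1 \<le> m * (2 * real (n+1)) * (1 / cos d)^n *
              exp (8 * real (n+1) * sqrt (sqrt ((d - measure lebesgue F) / measure lebesgue F)))"
proof -
  define N where "N = n + 1"
  define \<tau> where "\<tau> = measure lebesgue F"
  define s where "s = d - \<tau>"
  define csq where "csq = (real N)^2 * s / \<tau>"
  define t where "t i = \<tau> * (real i)^2 / (real N)^2" for i :: nat
  have Fm: "F \<in> lmeasurable" using F by (intro lmeasurable_compact)
  have taud: "\<tau> \<le> d"
  proof -
    have "\<tau> \<le> measure lebesgue {0..d}" unfolding \<tau>_def using F Fm by (intro measure_mono_fmeasurable) auto
    then show ?thesis using tau \<tau>_def by (cases "0 \<le> d") auto
  qed
  have s0: "0 \<le> s" using taud s_def by simp
  have taupos: "0 < \<tau>" using tau \<tau>_def by simp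
  have csq0: "0 \<le> csq" unfolding csq_def using s0 taupos by simp
  have N1: "1 \<le> N" unfolding N_def by simp
  have tpos: "0 < t i" "t i \<le> \<tau>" if "i \<in> {1..N}" for i
  proof -
    show "0 < t i" unfolding t_def using that taupos by auto
    have "(real i)^2 \<le> (real N)^2" using that by (intro power_mono) auto
    then have "(real i)^2 / (real N)^2 \<le> 1" using N1 by (simp add: divide_le_eq_1)
    then show "t i \<le> \<tau>" unfolding t_def using taupos
      by (metis mult_left_le times_divide_eq_right less_eq_real_def)
  qed
  have "\<forall>i\<in>{1..N}. \<exists>x\<in>F. measure lebesgue (F \<inter> {..x}) = t i"
    using node_exists[OF F] tpos unfolding \<tau>_def by blast
  then obtain x where x: "\<And>i. i \<in> {1..N} \<Longrightarrow> x i \<in> F \<and> measure lebesgue (F \<inter> {..x i}) = t i"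
    by metis
  have xr: "0 \<le> x i" "x i \<le> d" if "i \<in> {1..N}" for i using x[OF that] F by auto
  have m0: "0 \<le> m"
  proof -
    have "1 \<in> {1..N}" using N1 by simp
    then have "cmod (poly q (cis (x 1))) \<le> m" using M x by blast
    then show ?thesis using norm_ge_zero order_trans by blast
  qed
  have tdiff: "\<bar>t i - t j\<bar> \<le> \<bar>x i - x j\<bar>" if "i \<in> {1..N}" "j \<in> {1..N}" for i j
    using psi_dist[OF F(1), of "x i" "x j"] x[OF that(1)] x[OF that(2)] by simp
  have tne: "0 < \<bar>t i - t j\<bar>" if "i \<in> {1..N}" "j \<in> {1..N}" "i \<noteq> j" for i j
  proof -
    have "(real i)^2 \<noteq> (real j)^2" using that by simp
    then show ?thesis unfolding t_def using taupos N1 by (auto simp: field_simps)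
  qed
  have xt: "x j \<le> t j + s" if "j \<in> {1..N}" for j
    using psi_gap[OF F xr[OF that]] x[OF that] unfolding s_def \<tau>_def by simp
  define z where "z i = cis (x i)" for i
  have zdist: "cos d * \<bar>t i - t j\<bar> \<le> cmod (z i - z j)" if "i \<in> {1..N}" "j \<in> {1..N}" for i j
  proof -
    have "cos d * \<bar>t i - t j\<bar> \<le> cos d * \<bar>x i - x j\<bar>" using tdiff[OF that] d by (intro mult_left_mono) auto
    also have "\<dots> \<le> cmod (z i - z j)" unfolding z_def using xr[OF that(1)] xr[OF that(2)] d
      by (intro cis_diff_lower) auto
    finally show ?thesis .
  qed
  have zinj: "inj_on z {1..N}"
  proof (rule inj_onI, rule ccontr)
    fix i j assume ij: "i \<in> {1..N}" "j \<in> {1..N}" "z i = z j" "i \<noteq> j"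
    have "0 < cos d * \<bar>t i - t j\<bar>" using tne[OF ij(1,2,4)] d by simp
    also have "\<dots> \<le> cmod (z i - z j)" by (rule zdist[OF ij(1,2)])
    finally show False using ij by simp
  qed
  have lag: "poly q 1 = (\<Sum>i\<in>{1..N}. poly q (z i) * (\<Prod>j\<in>{1..N}-{i}. (1 - z j) / (z i - z j)))"
    by (rule lagrange_interp[OF zinj]) (use deg N_def in simp)
  define P where "P = (\<Prod>j\<in>{1..N}. 1 + csq / (real j)^2)"
  have factor: "cmod ((1 - z j) / (z i - z j)) \<le> (1 / cos d) * ((1 + csq / (real j)^2) * ((real j)^2 / \<bar>(real j)^2 - (real i)^2\<bar>))"
    if ij: "i \<in> {1..N}" "j \<in> {1..N}-{i}" for i j
  proof -
    have j: "j \<in> {1..N}" "i \<noteq> j" using ij by auto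
    have num: "cmod (1 - z j) \<le> t j + s"
      using cmod_one_minus_cis[of "x j"] xr[OF j(1)] xt[OF j(1)] unfolding z_def by simp
    have den: "cos d * \<bar>t i - t j\<bar> \<le> cmod (z i - z j)" by (rule zdist[OF ij(1) j(1)])
    have denpos: "0 < cos d * \<bar>t i - t j\<bar>" using tne[OF ij(1) j] d by simp
    have "cmod ((1 - z j) / (z i - z j)) = cmod (1 - z j) / cmod (z i - z j)" by (simp add: norm_divide)
    also have "\<dots> \<le> (t j + s) / (cos d * \<bar>t i - t j\<bar>)"
      by (rule frac_le) (use num den denpos s0 tpos[OF j(1)] in auto)
    also have "\<dots> = (1 / cos d) * ((1 + csq / (real j)^2) * ((real j)^2 / \<bar>(real j)^2 - (real i)^2\<bar>))"
    proof -
      have jpos: "0 < real j" using j by auto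
      have ne: "(real j)^2 - (real i)^2 \<noteq> 0" using j by simp
      have "\<bar>t i - t j\<bar> = \<tau> * \<bar>(real j)^2 - (real i)^2\<bar> / (real N)^2"
      proof -
        have "t i - t j = \<tau> * ((real i)^2 - (real j)^2) / (real N)^2" unfolding t_def by (simp add: diff_divide_distrib algebra_simps)
        then have "\<bar>t i - t j\<bar> = \<tau> * \<bar>(real i)^2 - (real j)^2\<bar> / (real N)^2" using taupos by (simp add: abs_mult)
        then show ?thesis by (simp add: abs_minus_commute)
      qed
      moreover have "t j + s = \<tau> * ((real j)^2 + csq) / (real N)^2"
        unfolding t_def csq_def using taupos N1 by (simp add: field_simps)
      ultimately have "(t j + s) / (cos d * \<bar>t i - t j\<bar>) = (\<tau> * ((real j)^2 + csq) / (real N)^2) / (cos d * (\<tau> * \<bar>(real j)^2 - (real i)^2\<bar> / (real N)^2))"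
        by (simp only:)
      also have "\<dots> = (1 / cos d) * (((real j)^2 + csq) / \<bar>(real j)^2 - (real i)^2\<bar>)"
        using taupos N1 d ne by (simp add: field_simps)
      also have "\<dots> = (1 / cos d) * ((1 + csq / (real j)^2) * ((real j)^2 / \<bar>(real j)^2 - (real i)^2\<bar>))"
      proof -
        have "((real j)^2 + csq) / \<bar>(real j)^2 - (real i)^2\<bar> = (1 + csq / (real j)^2) * ((real j)^2 / \<bar>(real j)^2 - (real i)^2\<bar>)"
          using jpos ne by (simp add: field_simps)
        then show ?thesis by (simp only:)
      qed
      finally show ?thesis .
    qed
    finally show ?thesis .
  qed
  have Bi: "cmod (\<Prod>j\<in>{1..N}-{i}. (1 - z j) / (z i - z j)) \<le> (1 / cos d)^n * P * 2" if i: "i \<in> {1..N}" for i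
  proof -
    have "cmod (\<Prod>j\<in>{1..N}-{i}. (1 - z j) / (z i - z j)) = (\<Prod>j\<in>{1..N}-{i}. cmod ((1 - z j) / (z i - z j)))"
      by (simp add: prod_norm)
    also have "\<dots> \<le> (\<Prod>j\<in>{1..N}-{i}. (1 / cos d) * ((1 + csq / (real j)^2) * ((real j)^2 / \<bar>(real j)^2 - (real i)^2\<bar>)))"
      by (intro prod_mono conjI norm_ge_zero factor[OF i]) 
    also have "\<dots> = (1 / cos d)^n * ((\<Prod>j\<in>{1..N}-{i}. 1 + csq / (real j)^2) * (\<Prod>j\<in>{1..N}-{i}. (real j)^2 / \<bar>(real j)^2 - (real i)^2\<bar>))"
    proof -
      have c: "card ({1..N}-{i}) = n" using i unfolding N_def by simp
      show ?thesis by (simp only: prod.distrib prod_constant c)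
    qed
    also have "\<dots> \<le> (1 / cos d)^n * (P * 2)"
    proof (intro mult_left_mono mult_mono)
      have e1: "P = (1 + csq / (real i)^2) * (\<Prod>j\<in>{1..N}-{i}. 1 + csq / (real j)^2)"
        unfolding P_def using i by (subst prod.remove) auto
      have e2: "0 \<le> (\<Prod>j\<in>{1..N}-{i}. 1 + csq / (real j)^2)" using csq0 by (intro prod_nonneg) auto
      have e3: "1 \<le> 1 + csq / (real i)^2" using csq0 by simp
      show "(\<Prod>j\<in>{1..N}-{i}. 1 + csq / (real j)^2) \<le> P"
        using mult_right_mono[OF e3 e2] unfolding e1 by simp
      show "(\<Prod>j\<in>{1..N}-{i}. (real j)^2 / \<bar>(real j)^2 - (real i)^2\<bar>) \<le> 2"
        using i by (intro G_bound) auto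
      show "0 \<le> P" unfolding P_def using csq0 by (intro prod_nonneg) auto
      show "0 \<le> (\<Prod>j\<in>{1..N}-{i}. (real j)^2 / \<bar>(real j)^2 - (real i)^2\<bar>)" by (intro prod_nonneg) auto
      show "0 \<le> (1 / cos d)^n" using d by simp
    qed
    finally show ?thesis by simp
  qed
  have "1 = cmod (poly q 1)" using q1 by simp
  also have "\<dots> \<le> (\<Sum>i\<in>{1..N}. cmod (poly q (z i) * (\<Prod>j\<in>{1..N}-{i}. (1 - z j) / (z i - z j))))"
    unfolding lag by (rule norm_sum)
  also have "\<dots> \<le> (\<Sum>i\<in>{1..N}. m * ((1 / cos d)^n * P * 2))"
  proof (intro sum_mono)
    fix i assume i: "i \<in> {1..N}"
    have "cmod (poly q (z i)) \<le> m" unfolding z_def using M x[OF i] by blast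
    then show "cmod (poly q (z i) * (\<Prod>j\<in>{1..N}-{i}. (1 - z j) / (z i - z j))) \<le> m * ((1 / cos d)^n * P * 2)"
      unfolding norm_mult using Bi[OF i] m0 by (intro mult_mono) auto
  qed
  also have "\<dots> = m * (2 * real N) * (1 / cos d)^n * P" by simp
  also have "\<dots> \<le> m * (2 * real N) * (1 / cos d)^n * exp (8 * real N * sqrt (sqrt (s / \<tau>)))"
  proof -
    have P1: "P \<le> exp (8 * sqrt (sqrt csq) * sqrt (real N))"
      unfolding P_def using prod_bound[of "sqrt csq" N] csq0 by simp
    have eq: "sqrt (sqrt csq) * sqrt (real N) = real N * sqrt (sqrt (s / \<tau>))"
    proof -
      have "sqrt csq = sqrt ((real N)^2) * sqrt (s / \<tau>)" unfolding csq_def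
        by (simp only: real_sqrt_mult[symmetric] times_divide_eq_right)
      then have "sqrt csq = real N * sqrt (s / \<tau>)" by simp
      then have "sqrt (sqrt csq) = sqrt (real N) * sqrt (sqrt (s / \<tau>))" by (simp add: real_sqrt_mult)
      then show ?thesis by (simp add: mult_ac)
    qed
    have "P \<le> exp (8 * real N * sqrt (sqrt (s / \<tau>)))"
      using P1 eq by (simp add: mult.assoc)
    then show ?thesis using d m0 by (intro mult_left_mono) auto
  qed
  finally show ?thesis unfolding N_def s_def \<tau>_def by simp
qed



lemma integral_lower:
  fixes f :: "real \<Rightarrow> real" and q :: "complex poly"
  assumes nonneg: "\<And>l. l \<in> {-pi..pi} \<Longrightarrow> f l \<ge> 0"
    and integrable: "set_integrable lebesgue {-pi..pi} f"
    and K: "closed K" "K \<subseteq> {0..d}" "\<And>x. x \<in> K \<Longrightarrow> \<epsilon> \<le> f x"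
    and eps: "\<epsilon> > 0" and gam: "\<gamma> > 0" and d: "0 < d" "d \<le> 1" "cos d > 0"
    and rho: "\<rho> > 0" and kappa: "d / (1 + \<rho>^4) \<le> measure lebesgue K - \<gamma>"
    and deg: "degree q \<le> n" and q1: "poly q 1 = 1"
  shows "\<epsilon> * \<gamma> \<le> (LINT l:{-pi..pi}|lebesgue. (cmod (poly q (cis l)))^2 * f l) *
            (2 * real (n+1) * (1 / cos d)^n * exp (8 * real (n+1) * \<rho>))^2"
proof -
  define h where "h l = (cmod (poly q (cis l)))^2" for l
  define W where "W = 2 * real (n+1) * (1 / cos d)^n * exp (8 * real (n+1) * \<rho>)"
  define I where "I = (LINT l:{-pi..pi}|lebesgue. h l * f l)"
  have hcont: "continuous_on UNIV h" unfolding h_def by (intro continuous_intros)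
  have h0: "0 \<le> h l" for l unfolding h_def by simp
  have dpi: "d \<le> pi" using d pi_gt3 by linarith
  have Ksub: "K \<subseteq> {-pi..pi}" using K(2) dpi pi_gt3 by auto
  have Kc: "compact K" using K by (meson bounded_closed_interval bounded_subset compact_eq_bounded_closed)
  have Km: "K \<in> lmeasurable" using Kc by (rule lmeasurable_compact)
  have hint: "set_integrable lebesgue {-pi..pi} (\<lambda>l. h l * f l)"
  proof (rule absolutely_integrable_bounded_measurable_product_real)
    show "h \<in> borel_measurable (lebesgue_on {-pi..pi})"
      using hcont by (intro continuous_imp_measurable_on_sets_lebesgue) (auto intro: continuous_on_subset)
    show "bounded (h ` {-pi..pi})"
      using hcont by (intro compact_imp_bounded compact_continuous_image) (auto intro: continuous_on_subset)
  qed (use integrable in auto)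
  have I0: "0 \<le> I" unfolding I_def set_lebesgue_integral_def
    by (intro Bochner_Integration.integral_nonneg) (auto simp: indicator_def h0 nonneg)
  have W0: "0 < W" unfolding W_def using d by simp
  have "\<epsilon> * \<gamma> \<le> I * W^2"
  proof (rule field_le_epsilon)
    fix e :: real assume e: "0 < e"
    define \<zeta> where "\<zeta> = e / W^2"
    have z0: "0 < \<zeta>" unfolding \<zeta>_def using e W0 by simp
    define M where "M = (I + \<zeta>) / (\<epsilon> * \<gamma>)"
    have M0: "0 < M" unfolding M_def using I0 z0 eps gam by simp
    define F where "F = K \<inter> {x. h x \<le> M}"
    define B where "B = K - F"
    have Fc: "compact F"
    proof -
      have "closed F" unfolding F_def using K(1) hcont by (intro closed_Int closed_Collect_le continuous_intros) auto
      moreover have "bounded F" using Kc unfolding F_def by (meson Int_lower1 bounded_subset compact_imp_bounded)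
      ultimately show ?thesis by (simp add: compact_eq_bounded_closed)
    qed
    have Fm: "F \<in> lmeasurable" using Fc by (rule lmeasurable_compact)
    have Bm: "B \<in> sets lebesgue" unfolding B_def using Fm Km by (intro sets.Diff fmeasurableD)
    have Bfin: "emeasure lebesgue B < \<infinity>"
    proof -
      have "emeasure lebesgue B \<le> emeasure lebesgue K" unfolding B_def using Km by (intro emeasure_mono) auto
      also have "\<dots> < \<infinity>" using fmeasurableD2[OF Km] by (simp add: less_top)
      finally show ?thesis .
    qed
    have Bmeas: "\<epsilon> * M * measure lebesgue B \<le> I"
    proof -
      have "\<epsilon> * M * measure lebesgue B = integral\<^sup>L lebesgue (\<lambda>x. (\<epsilon> * M) * indicator B x)"
        using Bm by simp
      also have "\<dots> \<le> integral\<^sup>L lebesgue (\<lambda>x. indicator {-pi..pi} x *\<^sub>R (h x * f x))"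
      proof (rule integral_mono)
        show "integrable lebesgue (\<lambda>x. (\<epsilon> * M) * indicator B x)"
          using Bm Bfin by (intro integrable_mult_right integrable_real_indicator) auto
        show "integrable lebesgue (\<lambda>x. indicator {-pi..pi} x *\<^sub>R (h x * f x))"
          using hint by (simp add: set_integrable_def)
        fix x
        show "(\<epsilon> * M) * indicator B x \<le> indicator {-pi..pi} x *\<^sub>R (h x * f x)"
        proof (cases "x \<in> B")
          case True
          then have xK: "x \<in> K" and hx: "M < h x" unfolding B_def F_def by auto
          have "\<epsilon> * M \<le> f x * h x" using K(3)[OF xK] hx eps M0 by (intro mult_mono) auto
          then show ?thesis using True xK Ksub by (auto simp: mult.commute)
        next
          case False
          then show ?thesis using h0 nonneg by (auto simp: indicator_def)
        qed
      qed
      also have "\<dots> = I" unfolding I_def set_lebesgue_integral_def by simp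
      finally show ?thesis .
    qed
    have Bg: "measure lebesgue B < \<gamma>"
    proof -
      have "\<epsilon> * M * measure lebesgue B < I + \<zeta>" using Bmeas z0 by simp
      also have "I + \<zeta> = \<epsilon> * M * \<gamma>" unfolding M_def using eps gam by simp
      finally show ?thesis using eps M0 by (simp add: mult_less_cancel_left_pos)
    qed
    have FK: "measure lebesgue F = measure lebesgue K - measure lebesgue B"
    proof -
      have "measure lebesgue B = measure lebesgue K - measure lebesgue F"
        unfolding B_def using Km Fm by (subst measure_Diff) (auto simp: F_def fmeasurable_def)
      then show ?thesis by simp
    qed
    have tau: "d / (1 + \<rho>^4) < measure lebesgue F" using FK Bg kappa by simp
    have tpos: "0 < measure lebesgue F" using tau d rho
      by (smt (verit) divide_pos_pos zero_less_power)
    have Fsub: "F \<subseteq> {0..d}" using K(2) unfolding F_def by auto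
    have bound: "1 \<le> sqrt M * (2 * real (n+1)) * (1 / cos d)^n *
              exp (8 * real (n+1) * sqrt (sqrt ((d - measure lebesgue F) / measure lebesgue F)))"
    proof (rule poly_node_bound[OF Fc Fsub dpi d(3) tpos q1 deg])
      fix x assume "x \<in> F"
      then have "(cmod (poly q (cis x)))^2 \<le> M" unfolding F_def h_def by auto
      then show "cmod (poly q (cis x)) \<le> sqrt M" by (rule real_le_rsqrt)
    qed
    have sr: "sqrt (sqrt ((d - measure lebesgue F) / measure lebesgue F)) \<le> \<rho>"
    proof -
      have "d \<le> (1 + \<rho>^4) * measure lebesgue F" using tau rho
        by (simp add: divide_less_eq add_pos_nonneg less_imp_le mult.commute)
      then have "(d - measure lebesgue F) / measure lebesgue F \<le> \<rho>^4"
        using tpos by (simp add: divide_le_eq algebra_simps)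
      then have "sqrt (sqrt ((d - measure lebesgue F) / measure lebesgue F)) \<le> sqrt (sqrt (\<rho>^4))"
        by (intro real_sqrt_le_mono)
      also have "sqrt (sqrt (\<rho>^4)) = \<rho>"
      proof -
        have "\<rho>^4 = (\<rho>^2)^2" by simp
        then have "sqrt (\<rho>^4) = \<rho>^2" by (simp only: real_sqrt_abs) simp
        then show ?thesis using rho by simp
      qed
      finally show ?thesis .
    qed
    have "1 \<le> sqrt M * W"
    proof -
      have "exp (8 * real (n+1) * sqrt (sqrt ((d - measure lebesgue F) / measure lebesgue F))) \<le> exp (8 * real (n+1) * \<rho>)"
        using sr by simp
      then have "sqrt M * (2 * real (n+1)) * (1 / cos d)^n * exp (8 * real (n+1) * sqrt (sqrt ((d - measure lebesgue F) / measure lebesgue F)))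
           \<le> sqrt M * (2 * real (n+1)) * (1 / cos d)^n * exp (8 * real (n+1) * \<rho>)"
        using M0 d by (intro mult_left_mono) auto
      then show ?thesis using bound unfolding W_def by (simp add: mult_ac)
    qed
    then have "1 \<le> (sqrt M * W)^2" by (simp add: one_le_power)
    also have "\<dots> = M * W^2" using M0 by (simp add: power_mult_distrib)
    finally have "1 \<le> (I + \<zeta>) / (\<epsilon> * \<gamma>) * W^2" unfolding M_def .
    then have "\<epsilon> * \<gamma> \<le> (I + \<zeta>) * W^2" using eps gam by (simp add: field_simps)
    also have "\<dots> = I * W^2 + e" unfolding \<zeta>_def using W0 by (simp add: algebra_simps)
    finally show "\<epsilon> * \<gamma> \<le> I * W^2 + e" .
  qed
  then show ?thesis unfolding I_def W_def h_def .
qed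



lemma cos_lower: "1 - x^2 / 2 \<le> cos (x::real)"
proof -
  have c: "cos x = 1 - 2 * (sin (x/2))^2"
    using cos_double[of "x/2"] sin_cos_squared_add[of "x/2"] by simp
  have "(sin (x/2))^2 \<le> (x/2)^2" using abs_sin_x_le_abs_x[of "x/2"] by (simp only: abs_le_square_iff)
  then show ?thesis using c by (simp add: power_divide)
qed

lemma lim_sq_geom:
  fixes x :: real assumes "0 \<le> x" "x < 1"
  shows "(\<lambda>n. (real n + 1)^2 * x^n) \<longlonglongrightarrow> 0"
proof -
  define y where "y = sqrt x"
  have y: "0 \<le> y" "y < 1" "y^2 = x" using assms unfolding y_def by (auto simp: real_sqrt_lt_1_iff)
  have a: "(\<lambda>n. real n * y^n) \<longlonglongrightarrow> 0" using y by (intro powser_times_n_limit_0) auto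
  have b: "(\<lambda>n. y^n) \<longlonglongrightarrow> 0" using y by (intro LIMSEQ_realpow_zero) auto
  have "(\<lambda>n. real n * y^n + y^n) \<longlonglongrightarrow> 0 + 0" by (intro tendsto_add a b)
  then have c: "(\<lambda>n. (real n + 1) * y^n) \<longlonglongrightarrow> 0" by (simp add: algebra_simps)
  have "(\<lambda>n. ((real n + 1) * y^n) * ((real n + 1) * y^n)) \<longlonglongrightarrow> 0 * 0" by (intro tendsto_mult c)
  moreover have "((real n + 1) * y^n) * ((real n + 1) * y^n) = (real n + 1)^2 * x^n" for n
    using y(3) by (simp add: power2_eq_square power_mult_distrib[symmetric] algebra_simps flip: power_mult_distrib)
  ultimately show ?thesis by simp
qed

theorem corollary8p1:
  fixes f :: "real \<Rightarrow> real"
  assumes nonneg: "\<And>l. l \<in> {-pi..pi} \<Longrightarrow> f l \<ge> 0"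
    and integrable: "set_integrable lebesgue {-pi..pi} f"
    and pos: "(LINT l:{-pi..pi}|lebesgue. f l) > 0"
    and expdecay: "limsup (\<lambda>n. ereal (root n (sigma2 n f))) < 1"
  shows "\<forall>U. open U \<and> 0 \<in> U \<longrightarrow>
           emeasure lebesgue {l \<in> U \<inter> {-pi..pi}. f l = 0} > 0"
proof (intro allI impI, rule ccontr)
  fix U :: "real set" assume U: "open U \<and> 0 \<in> U"
    and nz: "\<not> emeasure lebesgue {l \<in> U \<inter> {-pi..pi}. f l = 0} > 0"
  have Z: "emeasure lebesgue {l \<in> U \<inter> {-pi..pi}. f l = 0} = 0" using nz by (simp add: not_gr_zero)
  obtain z where z: "limsup (\<lambda>n. ereal (root n (sigma2 n f))) < z" "z < 1" using expdecay dense by blast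
  define r where "r = max (1/2) (real_of_ereal z)"
  have r: "1/2 \<le> r" "r < 1"
  proof -
    show "1/2 \<le> r" unfolding r_def by simp
    have "real_of_ereal z < 1" by (cases z) (use z(2) in auto)
    then show "r < 1" unfolding r_def by simp
  qed
  have zr: "z \<le> ereal r" unfolding r_def by (cases z) (use z(2) in auto)
  have ev1: "eventually (\<lambda>n. root n (sigma2 n f) < r) sequentially"
  proof -
    have "eventually (\<lambda>n. ereal (root n (sigma2 n f)) < z) sequentially" by (rule Limsup_lessD[OF z(1)])
    then show ?thesis
    proof (rule eventually_mono)
      fix n assume "ereal (root n (sigma2 n f)) < z"
      then have "ereal (root n (sigma2 n f)) < ereal r" using zr by (rule order.strict_trans2)
      then show "root n (sigma2 n f) < r" by simp
    qed
  qed
  obtain e where e: "e > 0" "ball 0 e \<subseteq> U" using U open_contains_ball by blast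
  define r4 where "r4 = sqrt (sqrt r)"
  have r4: "0 < r4" "r4 < 1" "r4^2 = sqrt r" using r unfolding r4_def by (auto simp: real_sqrt_lt_1_iff)
  define d where "d = min (e/2) (min 1 (sqrt (1 - r4)))"
  have d: "0 < d" "d \<le> 1" "d < e" "d^2 \<le> 1 - r4"
  proof -
    show "0 < d" unfolding d_def using e r4 by auto
    show "d \<le> 1" unfolding d_def by auto
    show "d < e" unfolding d_def using e by auto
    have "d \<le> sqrt (1 - r4)" unfolding d_def by auto
    then have "d^2 \<le> (sqrt (1 - r4))^2" using \<open>0 < d\<close> by (intro power_mono) auto
    then show "d^2 \<le> 1 - r4" using r4 by simp
  qed
  have cosd: "r4 < cos d"
  proof -
    have "r4 < 1 - d^2/2" using d r4 by linarith
    then show ?thesis using cos_lower[of d] by linarith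
  qed
  have cos2: "sqrt r < (cos d)^2"
  proof -
    have "r4^2 < (cos d)^2" using cosd r4 by (intro power_strict_mono) auto
    then show ?thesis using r4 by simp
  qed
  have cpos: "0 < cos d" using cosd r4 by simp
  define \<rho> where "\<rho> = - ln (sqrt r) / 16"
  have rho: "0 < \<rho>" "exp (16 * \<rho>) = 1 / sqrt r"
  proof -
    have "sqrt r < 1" "0 < sqrt r" using r by (auto simp: real_sqrt_lt_1_iff)
    then show "0 < \<rho>" unfolding \<rho>_def by simp
    show "exp (16 * \<rho>) = 1 / sqrt r" unfolding \<rho>_def using \<open>0 < sqrt r\<close> by (simp add: exp_minus field_simps)
  qed
  define \<eta> where "\<eta> = d - d / (1 + \<rho>^4)"
  have eta: "0 < \<eta>"
  proof -
    have p: "1 < 1 + \<rho>^4" using rho by simp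
    have p0: "0 < 1 + \<rho>^4" using p by linarith
    have "d / (1 + \<rho>^4) < d" using d p p0 by (simp add: divide_less_eq)
    then show ?thesis unfolding \<eta>_def by simp
  qed
  have etad: "\<eta> \<le> d"
  proof -
    have "0 \<le> d / (1 + \<rho>^4)" using d rho by (intro divide_nonneg_pos) (auto intro: add_pos_nonneg)
    then show ?thesis unfolding \<eta>_def by simp
  qed
  define g where "g x = indicator {-pi..pi} x * f x" for x
  have gm: "g \<in> borel_measurable lebesgue"
    using integrable unfolding set_integrable_def g_def by (auto dest: borel_measurable_integrable)
  have dsub: "{0..d} \<subseteq> {-pi..pi}" using d pi_gt3 by auto
  have gf: "g x = f x" if "x \<in> {0..d}" for x using that dsub unfolding g_def by auto
  define A where "A k = {l \<in> {0..d}. 1 / real (Suc k) \<le> g l}" for k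
  have Am: "A k \<in> sets lebesgue" for k
  proof -
    have "{l. 1 / real (Suc k) \<le> g l} \<in> sets lebesgue" using borel_measurable_iff_ge[of g lebesgue] gm by simp
    moreover have "A k = {0..d} \<inter> {l. 1 / real (Suc k) \<le> g l}" unfolding A_def by auto
    moreover have "{0..d} \<in> lmeasurable" by simp
    ultimately show ?thesis by (metis sets.Int fmeasurableD)
  qed
  have Ainc: "incseq A"
  proof (rule incseq_SucI)
    fix k
    have "1 / real (Suc (Suc k)) \<le> 1 / real (Suc k)" by (simp add: frac_le)
    then show "A k \<subseteq> A (Suc k)" unfolding A_def by auto
  qed
  define Nul where "Nul = {l \<in> U \<inter> {-pi..pi}. f l = 0}"
  have Nulm: "Nul \<in> sets lebesgue"
  proof -
    have "U \<in> sets lebesgue" using U by (simp add: borel_open sets_completionI_sets)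
    moreover have "{l. g l \<le> 0} \<in> sets lebesgue \<and> {l. 0 \<le> g l} \<in> sets lebesgue"
      using borel_measurable_iff_ge[of g lebesgue] borel_measurable_iff_le[of g lebesgue] gm by simp
    moreover have "Nul = U \<inter> {-pi..pi} \<inter> {l. g l \<le> 0} \<inter> {l. 0 \<le> g l}"
      unfolding Nul_def g_def by (auto simp: indicator_def)
    moreover have "{-pi..pi} \<in> lmeasurable" by simp
    ultimately show ?thesis by (metis sets.Int fmeasurableD)
  qed
  have Nul0: "emeasure lebesgue Nul = 0" using Z unfolding Nul_def .
  have UA: "{0..d} \<subseteq> (\<Union>k. A k) \<union> Nul"
  proof
    fix l assume l: "l \<in> {0..d}"
    show "l \<in> (\<Union>k. A k) \<union> Nul"
    proof (cases "f l = 0")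
      case True
      have "l \<in> U" using l d e by (auto simp: dist_real_def)
      then show ?thesis using True l dsub unfolding Nul_def by auto
    next
      case False
      then have "0 < g l" using nonneg[of l] l dsub gf[OF l] by auto
      then obtain k where "inverse (real (Suc k)) < g l" using reals_Archimedean by blast
      then have "l \<in> A k" unfolding A_def using l by (simp add: inverse_eq_divide)
      then show ?thesis by blast
    qed
  qed
  have UAsub: "(\<Union>k. A k) \<subseteq> {0..d}" unfolding A_def by auto
  have UAm: "(\<Union>k. A k) \<in> sets lebesgue" using Am by auto
  have lim: "(\<lambda>k. emeasure lebesgue (A k)) \<longlonglongrightarrow> emeasure lebesgue (\<Union>k. A k)"
    using Am Ainc by (intro Lim_emeasure_incseq) auto
  have UAd: "emeasure lebesgue (\<Union>k. A k) = ennreal d"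
  proof (rule antisym)
    show "emeasure lebesgue (\<Union>k. A k) \<le> ennreal d"
    proof -
      have "{0..d} \<in> lmeasurable" by simp
      then have "emeasure lebesgue (\<Union>k. A k) \<le> emeasure lebesgue {0..d}"
        using emeasure_mono[OF UAsub] fmeasurableD by blast
      then show ?thesis using d by simp
    qed
    have "ennreal d = emeasure lebesgue {0..d}" using d by simp
    also have "\<dots> \<le> emeasure lebesgue ((\<Union>k. A k) \<union> Nul)" using UA UAm Nulm by (intro emeasure_mono) auto
    also have "\<dots> \<le> emeasure lebesgue (\<Union>k. A k) + emeasure lebesgue Nul"
      using UAm Nulm by (intro emeasure_subadditive) auto
    finally show "ennreal d \<le> emeasure lebesgue (\<Union>k. A k)" using Nul0 by simp
  qed
  have "ennreal (d - \<eta>/4) < ennreal d" using eta etad d by (subst ennreal_less_iff) auto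
  then have "eventually (\<lambda>k. ennreal (d - \<eta>/4) < emeasure lebesgue (A k)) sequentially"
    using lim UAd by (metis order_tendstoD(1))
  then obtain k where k: "ennreal (d - \<eta>/4) < emeasure lebesgue (A k)"
    by (meson eventually_sequentially order_refl)
  have Akfin: "emeasure lebesgue (A k) \<noteq> top"
  proof -
    have "emeasure lebesgue (A k) \<le> emeasure lebesgue {0..d}" using Am unfolding A_def by (intro emeasure_mono) auto
    then show ?thesis using d by (auto simp: top_unique)
  qed
  have mAk: "d - \<eta>/4 < measure lebesgue (A k)"
    using k Akfin eta etad d by (simp add: emeasure_eq_ennreal_measure ennreal_less_iff)
  obtain T where T: "closed T" "T \<subseteq> A k" "A k - T \<in> lmeasurable" "emeasure lebesgue (A k - T) < ennreal (\<eta>/4)"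
    using sets_lebesgue_inner_closed[OF Am[of k], of "\<eta>/4"] eta by auto
  have Tsub: "T \<subseteq> {0..d}" using T(2) unfolding A_def by auto
  have Tc: "compact T" using T(1) Tsub by (meson bounded_closed_interval bounded_subset compact_eq_bounded_closed)
  have Tm: "T \<in> lmeasurable" using Tc by (rule lmeasurable_compact)
  have mAT: "measure lebesgue (A k - T) < \<eta>/4"
    using T(4) fmeasurableD2[OF T(3)] eta by (simp add: emeasure_eq_ennreal_measure ennreal_less_iff)
  have mT: "d - \<eta>/2 < measure lebesgue T"
  proof -
    have "measure lebesgue (A k - T) = measure lebesgue (A k) - measure lebesgue T"
      using Akfin Am Tm T(2) by (intro measure_Diff) auto
    then show ?thesis using mAk mAT by simp
  qed
  define \<epsilon> where "\<epsilon> = 1 / real (Suc k)"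
  define \<gamma> where "\<gamma> = \<eta> / 2"
  have Teps: "\<epsilon> \<le> f x" if "x \<in> T" for x
  proof -
    have "x \<in> A k" using that T by auto
    then show ?thesis unfolding A_def \<epsilon>_def using gf by auto
  qed
  have kap: "d / (1 + \<rho>^4) \<le> measure lebesgue T - \<gamma>"
  proof -
    have "d / (1 + \<rho>^4) = d - \<eta>" unfolding \<eta>_def by simp
    then show ?thesis using mT unfolding \<gamma>_def by linarith
  qed
  define W where "W n = 2 * real (n+1) * (1 / cos d)^n * exp (8 * real (n+1) * \<rho>)" for n
  have W0: "0 < W n" for n unfolding W_def using cpos by simp
  have low: "\<epsilon> * \<gamma> / (W n)^2 \<le> sigma2 n f" for n
  proof -
    have ne: "Qn1 n \<noteq> {}" unfolding Qn1_def by (rule ex_in_conv[THEN iffD1]) (rule exI[of _ "[:1:]"], simp)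
    show ?thesis unfolding sigma2_def
    proof (rule cINF_greatest[OF ne])
      fix q assume q: "q \<in> Qn1 n"
      have "\<epsilon> * \<gamma> \<le> (LINT l:{-pi..pi}|lebesgue. (cmod (poly q (cis l)))^2 * f l) * (W n)^2"
        unfolding W_def
        by (rule integral_lower[OF nonneg integrable T(1) Tsub Teps])
           (use q eta d cpos rho kap in \<open>auto simp: Qn1_def \<epsilon>_def \<gamma>_def\<close>)
      then show "\<epsilon> * \<gamma> / (W n)^2 \<le> (LINT l:{-pi..pi}|lebesgue. (cmod (poly q (cis l)))^2 * f l)"
        using W0[of n] by (simp add: divide_le_eq)
    qed
  qed
  define b where "b = (cos d)^2 * sqrt r"
  define x where "x = r / b"
  have b: "r < b"
  proof -
    have "r = sqrt r * sqrt r" using r by simp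
    also have "\<dots> < (cos d)^2 * sqrt r" using cos2 r by (intro mult_strict_right_mono) auto
    finally show ?thesis unfolding b_def .
  qed
  have x: "0 \<le> x" "x < 1" unfolding x_def using b r by auto
  define C where "C = \<epsilon> * \<gamma> / (4 * exp (16 * \<rho>))"
  have C0: "0 < C" unfolding C_def \<epsilon>_def \<gamma>_def using eta by simp
  have ev2: "eventually (\<lambda>n. (real n + 1)^2 * x^n < C) sequentially"
    using lim_sq_geom[OF x] C0 by (rule order_tendstoD(2))
  have Wsq: "(W n)^2 = 4 * exp (16 * \<rho>) * (real n + 1)^2 * (1 / b)^n" for n
  proof -
    have "(W n)^2 = 4 * (real n + 1)^2 * ((1 / cos d)^2)^n * (exp (8 * real (n+1) * \<rho>))^2"
    proof -
      have "(2 * real (n+1))^2 = 4 * (real n + 1)^2" by (simp add: power2_eq_square algebra_simps)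
      moreover have "((1 / cos d)^n)^2 = ((1 / cos d)^2)^n" by (simp add: power_mult[symmetric] mult.commute)
      ultimately show ?thesis unfolding W_def by (simp only: power_mult_distrib)
    qed
    also have "(exp (8 * real (n+1) * \<rho>))^2 = exp (16 * \<rho>) * (exp (16 * \<rho>))^n"
      by (simp add: exp_of_nat_mult[symmetric] exp_add[symmetric] power2_eq_square algebra_simps)
    also have "exp (16 * \<rho>) = 1 / sqrt r" by (rule rho(2))
    finally have "(W n)^2 = 4 * (real n + 1)^2 * ((1 / cos d)^2)^n * ((1 / sqrt r) * (1 / sqrt r)^n)" .
    moreover have "(1 / b)^n = ((1 / cos d)^2)^n * (1 / sqrt r)^n"
    proof -
      have "(1 / b) = (1 / cos d)^2 * (1 / sqrt r)" unfolding b_def using r cpos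
        by (simp add: field_simps power2_eq_square)
      then have "(1 / b)^n = ((1 / cos d)^2 * (1 / sqrt r))^n" by simp
      then show ?thesis by (simp only: power_mult_distrib)
    qed
    ultimately show ?thesis using rho(2) by (simp add: mult_ac)
  qed
  obtain n where n1: "n \<ge> 1" and n2: "root n (sigma2 n f) < r" and n3: "(real n + 1)^2 * x^n < C"
    using eventually_conj[OF ev1 ev2] eventually_conj[OF _ eventually_ge_at_top[of 1]]
    by (metis (no_types, lifting) eventually_sequentially order_refl eventually_conj_iff)
  have lowpos: "0 < \<epsilon> * \<gamma> / (W n)^2" unfolding \<epsilon>_def \<gamma>_def using eta W0[of n] by simp
  have s0: "0 \<le> sigma2 n f" using low[of n] lowpos by linarith
  have sr: "sigma2 n f < r^n"
  proof -
    have "root n (sigma2 n f) ^ n = sigma2 n f" using s0 n1 by (simp add: real_root_pow_pos2)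
    moreover have "root n (sigma2 n f) ^ n < r^n" using n2 s0 n1 by (intro power_strict_mono) auto
    ultimately show ?thesis by simp
  qed
  have "\<epsilon> * \<gamma> / (W n)^2 < r^n" using low[of n] sr by linarith
  then have "\<epsilon> * \<gamma> < r^n * (W n)^2" using W0[of n] by (simp add: divide_less_eq)
  also have "r^n * (W n)^2 = 4 * exp (16 * \<rho>) * ((real n + 1)^2 * x^n)"
  proof -
    have "r^n * (1 / b)^n = x^n" unfolding x_def by (simp add: power_divide)
    then show ?thesis unfolding Wsq by (simp add: mult_ac)
  qed
  finally have "C < (real n + 1)^2 * x^n" unfolding C_def by (simp add: divide_less_eq mult_ac)
  then show False using n3 by simp
qed

end
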